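(* Let $\mathcal{A}$ be a u-MPS core tensor over a finite alphabet $\Sigma$ with bond dimension $D$, and let $R$ be an arbitrary (possibly ambiguous) regular expression over $\Sigma$. Then the generalized right transfer operator $\mathcal{E}^{r}_R$ converges if and only if the generalized left transfer operator $\mathcal{E}^{\ell}_R$ converges, and in this case, for all $Q_r, Q_\ell \in \mathbb{R}^{D\times D}$, $$\mathcal{E}^{r}_R(Q_r) = \sum_{s\in\Sigma^*} |s|_R\, \mathcal{A}(s)\, Q_r\, \mathcal{A}(s)^T, \qquad \mathcal{E}^{\ell}_R(Q_\ell) = \sum_{s\in\Sigma^*} |s|_R\, \mathcal{A}(s)^T Q_\ell\, \mathcal{A}(s).$$ In particular, if $R$ is unambiguous (i.e. $|s|_R\in\{0,1\}$ for all $s$), then $\mathcal{E}^{r}_R(Q_r) = \sum_{s\in \mathcal{L}(R)} \mathcal{A}(s) Q_r \mathcal{A}(s)^T$ and $\mathcal{E}^{\ell}_R(Q_\ell) = \sum_{s\in \mathcal{L}(R)} \mathcal{A}(s)^T Q_\ell \mathcal{A}(s)$, where $\mathcal{L}(R)$ is the set of strings matching $R$.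
   Context: A u-MPS (uniform matrix product state) over a finite alphabet $\Sigma$ of size $d$ consists of a core tensor $\mathcal{A}$ of shape $(D,d,D)$, which assigns to each character $c\in\Sigma$ a matrix $\mathcal{A}(c)\in\mathbb{R}^{D\times D}$, together with boundary vectors $\alpha,\omega\in\mathbb{R}^D$. For a string $s=s_1\cdots s_n\in\Sigma^*$, $\mathcal{A}(s):=\mathcal{A}(s_1)\cdots\mathcal{A}(s_n)$, with $\mathcal{A}(\varepsilon)=I$ for the empty string $\varepsilon$. Regular expressions (regex) are syntax trees built from: single characters $c\in\Sigma$; concatenations $R_1R_2$; unions $R_1|R_2$; Kleene closures $S^*$. The match count $|s|_R\in\mathbb{N}\cup\{\infty\}$ of a string $s$ against $R$ is defined recursively: $|s|_c=1$ if $s=c$ and $0$ otherwise; $|s|_{R_1R_2}=\sum_{s_1s_2=s}|s_1|_{R_1}|s_2|_{R_2}$ (sum over all splittings of $s$ into prefix and suffix); $|s|_{R_1|R_2}=|s|_{R_1}+|s|_{R_2}$; $|s|_{S^*}=\sum_{n\ge0}\sum_{s_1\cdots s_n=s}|s_1|_S\cdots|s_n|_S$ (sum over all splittings into $n$ contiguous pieces; the $n=0$ term is $1$ if $s=\varepsilon$ and $0$ otherwise). $R$ is unambiguous if $|s|_R\in\{0,1\}$ for all $s$. Generalized transfer operators are linear maps on $D\times D$ matrices defined recursively: $\mathcal{E}^r_c(Q)=\mathcal{A}(c)Q\mathcal{A}(c)^T$, $\mathcal{E}^\ell_c(Q)=\mathcal{A}(c)^TQ\mathcal{A}(c)$; $\mathcal{E}^r_{R_1R_2}=\mathcal{E}^r_{R_1}\circ\mathcal{E}^r_{R_2}$,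 $\mathcal{E}^\ell_{R_1R_2}=\mathcal{E}^\ell_{R_2}\circ\mathcal{E}^\ell_{R_1}$; $\mathcal{E}^{r}_{R_1|R_2}=\mathcal{E}^{r}_{R_1}+\mathcal{E}^{r}_{R_2}$, $\mathcal{E}^{\ell}_{R_1|R_2}=\mathcal{E}^{\ell}_{R_1}+\mathcal{E}^{\ell}_{R_2}$; $\mathcal{E}^r_{S^*}(Q)=\sum_{n=0}^\infty(\mathcal{E}^r_S)^{\circ n}(Q)$, $\mathcal{E}^\ell_{S^*}(Q)=\sum_{n=0}^\infty(\mathcal{E}^\ell_S)^{\circ n}(Q)$, where $(\cdot)^{\circ 0}$ is the identity map. $\mathcal{E}^r_R$ (resp. $\mathcal{E}^\ell_R$) is said to converge if every infinite series arising from Kleene closures in this recursive definition converges (equivalently, for every subexpression $S^*$ of $R$, the spectral radius of the corresponding operator $\mathcal{E}^r_S$, resp. $\mathcal{E}^\ell_S$, is $<1$). *)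

theory Defs
  imports "HOL-Analysis.Analysis" "HOL-Library.Extended_Nat"
begin

datatype 'c regex = Atom 'c | Conc "'c regex" "'c regex" | Alt "'c regex" "'c regex"
  | Star "'c regex"

text \<open>Match count |s|_R in N \<union> {\<infinity>} (enat, with 0 * \<infinity> = 0). The infinite sum over the number
  of pieces in the Kleene closure is the supremum of its partial sums.\<close>
primrec match_count :: "'c regex \<Rightarrow> 'c list \<Rightarrow> enat" where
  "match_count (Atom c) s = (if s = [c] then 1 else 0)"
| "match_count (Conc R1 R2) s =
     (\<Sum>i\<in>{0..length s}. match_count R1 (take i s) * match_count R2 (drop i s))"
| "match_count (Alt R1 R2) s = match_count R1 s + match_count R2 s"
| "match_count (Star S) s =
     (SUP N. \<Sum>n<N. \<Sum>ps\<in>{ps. length ps = n \<and> concat ps = s}.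
                 prod_list (map (match_count S) ps))"

definition unambiguous :: "'c regex \<Rightarrow> bool" where
  "unambiguous R \<longleftrightarrow> (\<forall>s. match_count R s \<in> {0, 1})"

definition lang :: "'c regex \<Rightarrow> 'c list set" where
  "lang R = {s. match_count R s \<noteq> 0}"

definition word_mat :: "('c \<Rightarrow> real^'n^'n) \<Rightarrow> 'c list \<Rightarrow> real^'n^'n" where
  "word_mat A s = foldr (\<lambda>c M. A c ** M) s (mat 1)"

primrec E_r :: "('c \<Rightarrow> real^'n^'n) \<Rightarrow> 'c regex \<Rightarrow> real^'n^'n \<Rightarrow> real^'n^'n" where
  "E_r A (Atom c) = (\<lambda>Q. A c ** Q ** transpose (A c))"
| "E_r A (Conc R1 R2) = E_r A R1 \<circ> E_r A R2"
| "E_r A (Alt R1 R2) = (\<lambda>Q. E_r A R1 Q + E_r A R2 Q)"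
| "E_r A (Star S) = (\<lambda>Q. \<Sum>n. (E_r A S ^^ n) Q)"

primrec E_l :: "('c \<Rightarrow> real^'n^'n) \<Rightarrow> 'c regex \<Rightarrow> real^'n^'n \<Rightarrow> real^'n^'n" where
  "E_l A (Atom c) = (\<lambda>Q. transpose (A c) ** Q ** A c)"
| "E_l A (Conc R1 R2) = E_l A R2 \<circ> E_l A R1"
| "E_l A (Alt R1 R2) = (\<lambda>Q. E_l A R1 Q + E_l A R2 Q)"
| "E_l A (Star S) = (\<lambda>Q. \<Sum>n. (E_l A S ^^ n) Q)"

primrec conv_r :: "('c \<Rightarrow> real^'n^'n) \<Rightarrow> 'c regex \<Rightarrow> bool" where
  "conv_r A (Atom c) = True"
| "conv_r A (Conc R1 R2) = (conv_r A R1 \<and> conv_r A R2)"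
| "conv_r A (Alt R1 R2) = (conv_r A R1 \<and> conv_r A R2)"
| "conv_r A (Star S) = (conv_r A S \<and> (\<forall>Q. summable (\<lambda>n. (E_r A S ^^ n) Q)))"

primrec conv_l :: "('c \<Rightarrow> real^'n^'n) \<Rightarrow> 'c regex \<Rightarrow> bool" where
  "conv_l A (Atom c) = True"
| "conv_l A (Conc R1 R2) = (conv_l A R1 \<and> conv_l A R2)"
| "conv_l A (Alt R1 R2) = (conv_l A R1 \<and> conv_l A R2)"
| "conv_l A (Star S) = (conv_l A S \<and> (\<forall>Q. summable (\<lambda>n. (E_l A S ^^ n) Q)))"

end

theory Submission
  imports Defs
begin


definition convw :: "('c list \<Rightarrow> real) \<Rightarrow> ('c list \<Rightarrow> real) \<Rightarrow> 'c list \<Rightarrow> real" where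
  "convw a b s = (\<Sum>i\<in>{0..length s}. a (take i s) * b (drop i s))"

fun pw :: "('c list \<Rightarrow> real) \<Rightarrow> nat \<Rightarrow> 'c list \<Rightarrow> real" where
  "pw c 0 s = (if s = [] then 1 else 0)"
| "pw c (Suc n) s = convw c (pw c n) s"

definition HS :: "('c list \<Rightarrow> 'm \<Rightarrow> 'm::real_normed_vector) \<Rightarrow> ('c list \<Rightarrow> real) \<Rightarrow> ('m \<Rightarrow> 'm) \<Rightarrow> bool" where
  "HS T c F \<longleftrightarrow> (\<forall>Q. ((\<lambda>s. c s *\<^sub>R T s Q) has_sum F Q) UNIV)"

definition SM :: "('c list \<Rightarrow> real) \<Rightarrow> ('c list \<Rightarrow> real) \<Rightarrow> bool" where
  "SM f c \<longleftrightarrow> (\<forall>s. 0 \<le> c s) \<and> (\<lambda>s. c s * f s) summable_on UNIV"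

definition KK :: "('c list \<Rightarrow> real) \<Rightarrow> ('c list \<Rightarrow> real) \<Rightarrow> bool" where
  "KK f c \<longleftrightarrow> (\<lambda>(n,s). pw c n s * f s) summable_on (UNIV :: (nat \<times> 'c list) set)"

lemma bij_split: "bij_betw (\<lambda>(u,i). (take i u, drop i u)) (SIGMA u:UNIV. {0..length u}) (UNIV \<times> UNIV)"
  by (rule bij_betw_byWitness[where f'="\<lambda>(s,t). (s@t, length s)"]) auto

lemma pairs_group:
  fixes g :: "'c list \<Rightarrow> 'c list \<Rightarrow> 'a::real_normed_vector"
  assumes "((\<lambda>(s,t). g s t) has_sum X) (UNIV \<times> UNIV)"
  shows "((\<lambda>u. \<Sum>i\<in>{0..length u}. g (take i u) (drop i u)) has_sum X) UNIV"
proof -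
  have "((\<lambda>x. (\<lambda>(s,t). g s t) ((\<lambda>(u,i). (take i u, drop i u)) x)) has_sum X) (SIGMA u:UNIV. {0..length u})"
    using has_sum_reindex_bij_betw[OF bij_split] assms by blast
  then have h: "((\<lambda>(u,i). g (take i u) (drop i u)) has_sum X) (SIGMA u:UNIV. {0..length u})"
    by (simp add: case_prod_unfold)
  show ?thesis
    by (rule has_sum_SigmaD[OF h]) auto
qed

lemma prod_summable:
  fixes g h :: "'a \<Rightarrow> real"
  assumes "\<And>x. 0 \<le> g x" "\<And>y. 0 \<le> h y" "g summable_on UNIV" "h summable_on UNIV"
  shows "(\<lambda>(x,y). g x * h y) summable_on UNIV \<times> UNIV"
proof (rule summable_on_SigmaI[where g="\<lambda>x. g x * infsum h UNIV"])
  fix x :: 'a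
  show "((\<lambda>y. case (x, y) of (x, y) \<Rightarrow> g x * h y) has_sum g x * infsum h UNIV) UNIV"
    using has_sum_cmult_right[OF has_sum_infsum[OF assms(4)], of "g x"] by simp
next
  show "(\<lambda>x. g x * infsum h UNIV) summable_on UNIV"
    using assms(3) by (rule summable_on_cmult_left)
qed (use assms in auto)

lemma has_sum_point:
  fixes g :: "'a \<Rightarrow> 'b::real_normed_vector"
  assumes "\<And>x. x \<noteq> a \<Longrightarrow> g x = 0"
  shows "(g has_sum g a) UNIV"
proof -
  have "(g has_sum g a) {a}" by (simp add: has_sum_finiteI)
  then show ?thesis
    by (subst has_sum_cong_neutral[where T="{a}" and g=g]) (use assms in auto)
qed

locale tstruct =
  fixes T :: "'c list \<Rightarrow> 'm::banach \<Rightarrow> 'm" and f :: "'c list \<Rightarrow> real" and lft :: bool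
    and \<phi> :: "'m \<Rightarrow> real" and Q0 :: 'm
  assumes T_lin: "bounded_linear (T s)"
  and T_nil: "T [] Q = Q"
  and T_app: "T (s@t) Q = (if lft then T t (T s Q) else T s (T t Q))"
  and T_bound: "norm (T s Q) \<le> f s * norm Q"
  and f_nonneg: "0 \<le> f s"
  and f_app: "f (s@t) \<le> f s * f t"
  and f_nil: "0 < f []"
  and phi_lin: "bounded_linear \<phi>"
  and phi_T: "\<phi> (T s Q0) = f s"
begin

lemma T_scale: "T s (a *\<^sub>R Q) = a *\<^sub>R T s Q"
proof -
  interpret bounded_linear "T s" by (rule T_lin)
  show ?thesis by (rule scale)
qed

lemma conc:
  assumes SMa: "SM f a" and SMb: "SM f b" and HSa: "HS T a Fa" and HSb: "HS T b Fb"
  shows "SM f (convw a b) \<and> HS T (convw a b) (if lft then Fb \<circ> Fa else Fa \<circ> Fb)"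
proof
  have a0: "\<And>s. 0 \<le> a s" and b0: "\<And>s. 0 \<le> b s"
    using SMa SMb by (auto simp: SM_def)
  have P: "(\<lambda>(s,t). (a s * f s) * (b t * f t)) summable_on UNIV \<times> UNIV"
    by (rule prod_summable) (use SMa SMb a0 b0 f_nonneg in \<open>auto simp: SM_def\<close>)
  show "SM f (convw a b)"
    unfolding SM_def
  proof
    show "\<forall>s. 0 \<le> convw a b s"
      by (auto simp: convw_def a0 b0 intro!: sum_nonneg)
    obtain Y where Y: "((\<lambda>(s,t). (a s * f s) * (b t * f t)) has_sum Y) (UNIV \<times> UNIV)"
      using P summable_on_def by blast
    have G: "((\<lambda>u. \<Sum>i\<in>{0..length u}. (a (take i u) * f (take i u)) * (b (drop i u) * f (drop i u))) has_sum Y) UNIV"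
      using pairs_group[where g="\<lambda>s t. (a s * f s) * (b t * f t)"] Y by simp
    show "(\<lambda>s. convw a b s * f s) summable_on UNIV"
    proof (rule summable_on_comparison_test)
      show "(\<lambda>u. \<Sum>i\<in>{0..length u}. (a (take i u) * f (take i u)) * (b (drop i u) * f (drop i u))) summable_on UNIV"
        using G summable_on_def by blast
    next
      fix u :: "'c list"
      show "0 \<le> convw a b u * f u"
        by (auto simp: convw_def a0 b0 f_nonneg intro!: sum_nonneg mult_nonneg_nonneg)
      have "convw a b u * f u = (\<Sum>i\<in>{0..length u}. a (take i u) * b (drop i u) * f (take i u @ drop i u))"
        by (simp add: convw_def sum_distrib_right)
      also have "\<dots> \<le> (\<Sum>i\<in>{0..length u}. (a (take i u) * f (take i u)) * (b (drop i u) * f (drop i u)))"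
      proof (rule sum_mono)
        fix i
        have "a (take i u) * b (drop i u) * f (take i u @ drop i u) \<le> a (take i u) * b (drop i u) * (f (take i u) * f (drop i u))"
          by (rule mult_left_mono[OF f_app]) (simp add: a0 b0)
        then show "a (take i u) * b (drop i u) * f (take i u @ drop i u) \<le> (a (take i u) * f (take i u)) * (b (drop i u) * f (drop i u))"
          by (simp add: mult_ac)
      qed
      finally show "convw a b u * f u \<le> (\<Sum>i\<in>{0..length u}. (a (take i u) * f (take i u)) * (b (drop i u) * f (drop i u)))" .
    qed
  qed
  show "HS T (convw a b) (if lft then Fb \<circ> Fa else Fa \<circ> Fb)"
    unfolding HS_def
  proof
    fix Q
    define g where "g = (\<lambda>(s,t). (a s * b t) *\<^sub>R T (s@t) Q)"
    have gsum: "g summable_on UNIV \<times> UNIV"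
    proof (rule abs_summable_summable)
      have "(\<lambda>x. norm (g x)) summable_on UNIV \<times> UNIV"
      proof (rule summable_on_comparison_test)
        show "(\<lambda>x. (case x of (s,t) \<Rightarrow> (a s * f s) * (b t * f t)) * norm Q) summable_on UNIV \<times> UNIV"
          using P by (rule summable_on_cmult_left)
      next
        fix x :: "'c list \<times> 'c list"
        obtain s t where x: "x = (s,t)" by (cases x)
        have "norm (g x) = a s * b t * norm (T (s@t) Q)"
          by (simp add: g_def x a0 b0)
        also have "\<dots> \<le> a s * b t * (f (s@t) * norm Q)"
          by (rule mult_left_mono[OF T_bound]) (simp add: a0 b0)
        also have "\<dots> \<le> a s * b t * ((f s * f t) * norm Q)"
          by (intro mult_left_mono mult_right_mono f_app) (auto simp: a0 b0)
        finally show "norm (g x) \<le> (case x of (s,t) \<Rightarrow> (a s * f s) * (b t * f t)) * norm Q"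
          by (simp add: x mult_ac)
      qed simp
      then show "g abs_summable_on UNIV \<times> UNIV" by simp
    qed
    have gfull: "(g has_sum (if lft then Fb \<circ> Fa else Fa \<circ> Fb) Q) (UNIV \<times> UNIV)"
    proof (cases lft)
      case False
      have inner: "((\<lambda>t. g (s,t)) has_sum a s *\<^sub>R T s (Fb Q)) UNIV" for s
      proof -
        have bl: "bounded_linear (\<lambda>X. a s *\<^sub>R T s X)"
          by (rule bounded_linear_compose[OF bounded_linear_scaleR_right T_lin])
        have "((\<lambda>t. a s *\<^sub>R T s (b t *\<^sub>R T t Q)) has_sum a s *\<^sub>R T s (Fb Q)) UNIV"
          using has_sum_bounded_linear[OF bl, of "\<lambda>t. b t *\<^sub>R T t Q"] HSb by (auto simp: HS_def)
        then show ?thesis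
          by (simp add: g_def T_app False T_scale)
      qed
      have outer: "((\<lambda>s. a s *\<^sub>R T s (Fb Q)) has_sum Fa (Fb Q)) UNIV"
        using HSa by (auto simp: HS_def)
      have "(g has_sum Fa (Fb Q)) (UNIV \<times> UNIV)"
        by (rule has_sum_SigmaI[OF _ outer]) (use inner gsum in auto)
      then show ?thesis using False by simp
    next
      case True
      define g' where "g' = (\<lambda>(t,s). g (s,t))"
      have inner: "((\<lambda>s. g' (t,s)) has_sum b t *\<^sub>R T t (Fa Q)) UNIV" for t
      proof -
        have bl: "bounded_linear (\<lambda>X. b t *\<^sub>R T t X)"
          by (rule bounded_linear_compose[OF bounded_linear_scaleR_right T_lin])
        have "((\<lambda>s. b t *\<^sub>R T t (a s *\<^sub>R T s Q)) has_sum b t *\<^sub>R T t (Fa Q)) UNIV"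
          using has_sum_bounded_linear[OF bl, of "\<lambda>s. a s *\<^sub>R T s Q"] HSa by (auto simp: HS_def)
        then show ?thesis
          by (simp add: g'_def g_def T_app True T_scale mult_ac)
      qed
      have outer: "((\<lambda>t. b t *\<^sub>R T t (Fa Q)) has_sum Fb (Fa Q)) UNIV"
        using HSb by (auto simp: HS_def)
      have g'sum: "g' summable_on UNIV \<times> UNIV"
        using gsum summable_on_swap[where f=g and A=UNIV and B=UNIV] by (simp add: g'_def case_prod_unfold)
      have "(g' has_sum Fb (Fa Q)) (UNIV \<times> UNIV)"
        by (rule has_sum_SigmaI[OF _ outer]) (use inner g'sum in auto)
      then have "(g has_sum Fb (Fa Q)) (UNIV \<times> UNIV)"
        using has_sum_swap[where f=g' and S="Fb (Fa Q)" and A=UNIV and B=UNIV] by (simp add: g'_def case_prod_unfold)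
      then show ?thesis using True by simp
    qed
    have "((\<lambda>u. \<Sum>i\<in>{0..length u}. (a (take i u) * b (drop i u)) *\<^sub>R T (take i u @ drop i u) Q) has_sum (if lft then Fb \<circ> Fa else Fa \<circ> Fb) Q) UNIV"
      using pairs_group[where g="\<lambda>s t. (a s * b t) *\<^sub>R T (s@t) Q"] gfull by (simp add: g_def)
    then show "((\<lambda>s. convw a b s *\<^sub>R T s Q) has_sum (if lft then Fb \<circ> Fa else Fa \<circ> Fb) Q) UNIV"
      by (simp add: convw_def scaleR_sum_left)
  qed
qed

end



lemma pw_nonneg: "(\<And>s. 0 \<le> c s) \<Longrightarrow> 0 \<le> pw c n s"
  by (induction n arbitrary: s) (auto simp: convw_def intro!: sum_nonneg)

lemma pw_nil: "pw c n [] = c [] ^ n"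
  by (induction n) (auto simp: convw_def)

lemma has_sum_fin_nat:
  fixes g :: "nat \<Rightarrow> 'a::real_normed_vector"
  assumes "\<And>n. N < n \<Longrightarrow> g n = 0"
  shows "(g has_sum (\<Sum>n\<le>N. g n)) UNIV"
proof -
  have "(g has_sum (\<Sum>n\<le>N. g n)) {..N}" by (simp add: has_sum_finiteI)
  then show ?thesis
    by (subst has_sum_cong_neutral[where T="{..N}" and g=g]) (use assms in auto)
qed

lemma sum_by_s:
  fixes h :: "nat \<Rightarrow> 'c list \<Rightarrow> 'a::real_normed_vector"
  assumes "((\<lambda>(n,s). h n s) has_sum X) (UNIV \<times> UNIV)"
    and "\<And>n s. length s < n \<Longrightarrow> h n s = 0"
  shows "((\<lambda>s. \<Sum>n\<le>length s. h n s) has_sum X) UNIV"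
proof -
  have "((\<lambda>(s,n). h n s) has_sum X) (UNIV \<times> UNIV)"
    using has_sum_swap[where f="\<lambda>(n,s). h n s" and S=X and A=UNIV and B=UNIV] assms(1)
    by (simp add: case_prod_unfold)
  then show ?thesis
    by (rule has_sum_SigmaD) (auto intro!: has_sum_fin_nat assms(2))
qed

context tstruct
begin

lemma pow:
  assumes SMc: "SM f c" and HSc: "HS T c F"
  shows "SM f (pw c n) \<and> HS T (pw c n) (F ^^ n)"
proof (induction n)
  case 0
  have "SM f (pw c 0)"
    unfolding SM_def
  proof
    show "\<forall>s. 0 \<le> pw c 0 s" by simp
    have "((\<lambda>s. pw c 0 s * f s) has_sum (pw c 0 [] * f [])) UNIV"
      by (rule has_sum_point) simp
    then show "(\<lambda>s. pw c 0 s * f s) summable_on UNIV" using summable_on_def by blast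
  qed
  moreover have "HS T (pw c 0) (F ^^ 0)"
    unfolding HS_def
  proof
    fix Q
    have "((\<lambda>s. pw c 0 s *\<^sub>R T s Q) has_sum (pw c 0 [] *\<^sub>R T [] Q)) UNIV"
      by (rule has_sum_point) simp
    then show "((\<lambda>s. pw c 0 s *\<^sub>R T s Q) has_sum (F ^^ 0) Q) UNIV"
      by (simp add: T_nil)
  qed
  ultimately show ?case by blast
next
  case (Suc n)
  have e: "pw c (Suc n) = convw c (pw c n)" by (rule ext) simp
  have f1: "F ^^ Suc n = F \<circ> F ^^ n" by simp
  have f2: "F ^^ Suc n = F ^^ n \<circ> F" by (rule funpow_Suc_right)
  have conj: "SM f (convw c (pw c n)) \<and> HS T (convw c (pw c n)) (if lft then (F ^^ n) \<circ> F else F \<circ> F ^^ n)"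
    using conc[OF SMc _ HSc] Suc by blast
  have eq: "(if lft then (F ^^ n) \<circ> F else F \<circ> F ^^ n) = F ^^ Suc n"
    using f1 f2 by simp
  show ?case unfolding e eq[symmetric] by (rule conj)
qed

lemma phi_scale: "\<phi> (a *\<^sub>R x) = a * \<phi> x"
proof -
  interpret bounded_linear \<phi> by (rule phi_lin)
  show ?thesis using scale by simp
qed

lemma K_of_conv:
  assumes SMc: "SM f c" and HSc: "HS T c F" and cv: "\<forall>Q. summable (\<lambda>n. (F ^^ n) Q)"
  shows "KK f c"
proof -
  have c0: "\<And>s. 0 \<le> c s" using SMc by (simp add: SM_def)
  have h: "((\<lambda>s. pw c n s * f s) has_sum \<phi> ((F ^^ n) Q0)) UNIV" for n
  proof -
    have "((\<lambda>s. pw c n s *\<^sub>R T s Q0) has_sum (F ^^ n) Q0) UNIV"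
      using pow[OF SMc HSc, of n] by (simp add: HS_def)
    from has_sum_bounded_linear[OF phi_lin this] show ?thesis
      by (simp add: phi_scale phi_T)
  qed
  have nn: "0 \<le> \<phi> ((F ^^ n) Q0)" for n
    by (rule has_sum_nonneg[OF h]) (simp add: pw_nonneg c0 f_nonneg)
  have "summable (\<lambda>n. \<phi> ((F ^^ n) Q0))"
    using bounded_linear.summable[OF phi_lin] cv by blast
  then have sg: "(\<lambda>n. \<phi> ((F ^^ n) Q0)) summable_on UNIV"
    using summable_nonneg_imp_summable_on nn by blast
  have "(\<lambda>(n,s). pw c n s * f s) summable_on UNIV \<times> UNIV"
    by (rule summable_on_SigmaI[OF _ sg]) (use h in \<open>auto simp: pw_nonneg c0 f_nonneg\<close>)
  then show ?thesis by (simp add: KK_def)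
qed

lemma conv_of_K:
  assumes SMc: "SM f c" and HSc: "HS T c F" and K: "KK f c"
  shows "summable (\<lambda>n. (F ^^ n) Q)"
proof -
  have c0: "\<And>s. 0 \<le> c s" using SMc by (simp add: SM_def)
  define k where "k n = infsum (\<lambda>s. pw c n s * f s) UNIV" for n
  obtain Y where Y: "((\<lambda>(n,s). pw c n s * f s) has_sum Y) (UNIV \<times> UNIV)"
    using K by (auto simp: KK_def summable_on_def)
  have ks: "((\<lambda>s. pw c n s * f s) has_sum k n) UNIV" for n
    using pow[OF SMc HSc, of n] by (auto simp: SM_def k_def)
  have "(k has_sum Y) UNIV"
    by (rule has_sum_SigmaD[OF Y]) (use ks in auto)
  then have "summable k" using has_sum_imp_sums summable_def by blast
  then have sk: "summable (\<lambda>n. k n * norm Q)" by (rule summable_mult2)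
  have bound: "norm ((F ^^ n) Q) \<le> k n * norm Q" for n
  proof -
    have HSn: "((\<lambda>s. pw c n s *\<^sub>R T s Q) has_sum (F ^^ n) Q) UNIV"
      using pow[OF SMc HSc, of n] by (simp add: HS_def)
    have bnd: "norm (pw c n s *\<^sub>R T s Q) \<le> pw c n s * f s * norm Q" for s
    proof -
      have "norm (pw c n s *\<^sub>R T s Q) = pw c n s * norm (T s Q)"
        by (simp add: pw_nonneg c0)
      also have "\<dots> \<le> pw c n s * (f s * norm Q)"
        by (rule mult_left_mono[OF T_bound]) (simp add: pw_nonneg c0)
      finally show ?thesis by (simp add: mult_ac)
    qed
    have s2: "(\<lambda>s. pw c n s * f s * norm Q) summable_on UNIV"
      using ks by (intro summable_on_cmult_left) (auto simp: summable_on_def)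
    have ns: "(\<lambda>s. norm (pw c n s *\<^sub>R T s Q)) summable_on UNIV"
      by (rule summable_on_comparison_test[OF s2]) (use bnd in auto)
    have "norm ((F ^^ n) Q) \<le> infsum (\<lambda>s. norm (pw c n s *\<^sub>R T s Q)) UNIV"
      by (rule norm_has_sum_bound[OF has_sum_infsum[OF ns] HSn])
    also have "\<dots> \<le> infsum (\<lambda>s. pw c n s * f s * norm Q) UNIV"
      by (rule infsum_mono[OF ns s2 bnd])
    also have "\<dots> = k n * norm Q"
      by (simp add: k_def infsum_cmult_left')
    finally show ?thesis .
  qed
  show ?thesis
    by (rule summable_comparison_test[OF _ sk]) (use bound in auto)
qed

lemma star:
  assumes SMc: "SM f c" and HSc: "HS T c F" and nat: "\<And>s. c s \<in> \<nat>" and K: "KK f c"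
  shows "(\<forall>n s. length s < n \<longrightarrow> pw c n s = 0) \<and> SM f (\<lambda>s. \<Sum>n\<le>length s. pw c n s)
     \<and> HS T (\<lambda>s. \<Sum>n\<le>length s. pw c n s) (\<lambda>Q. \<Sum>n. (F ^^ n) Q)"
proof -
  have c0: "\<And>s. 0 \<le> c s" using SMc by (simp add: SM_def)
  have Ksum: "(\<lambda>(n,s). pw c n s * f s) summable_on UNIV \<times> UNIV"
    using K by (simp add: KK_def)
  have cnil: "c [] = 0"
  proof -
    have "(\<lambda>(s,n). pw c n s * f s) summable_on UNIV \<times> UNIV"
      using Ksum summable_on_swap[where f="\<lambda>(n,s). pw c n s * f s" and A=UNIV and B=UNIV]
      by (simp add: case_prod_unfold)
    then have "(\<lambda>n. pw c n [] * f []) summable_on UNIV"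
      using summable_on_SigmaD1[where f="\<lambda>s n. pw c n s * f s" and x="[]" and A=UNIV and B="\<lambda>_. UNIV"]
      by auto
    then have "summable (\<lambda>n. pw c n [] * f [])"
      by (rule summable_on_imp_summable)
    then have "(\<lambda>n. c [] ^ n * f []) \<longlonglongrightarrow> 0"
      using summable_LIMSEQ_zero by (simp add: pw_nil)
    then have "(\<lambda>n. c [] ^ n * f [] / f []) \<longlonglongrightarrow> 0 / f []"
      by (intro tendsto_divide) (use f_nil in auto)
    then have lim: "(\<lambda>n. c [] ^ n) \<longlonglongrightarrow> 0" using f_nil by simp
    obtain k :: nat where k: "c [] = real k" using nat by (metis Nats_cases)
    show ?thesis
    proof (rule ccontr)
      assume "c [] \<noteq> 0"
      then have "1 \<le> c []" using k by simp
      then have "\<forall>n. 1 \<le> c [] ^ n" by (simp add: one_le_power)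
      then have "(1::real) \<le> 0" using LIMSEQ_le_const[OF lim] by blast
      then show False by simp
    qed
  qed
  have van: "\<forall>n s. length s < n \<longrightarrow> pw c n s = 0"
  proof (rule allI)
    fix n
    show "\<forall>s. length s < n \<longrightarrow> pw c n s = 0"
    proof (induction n)
      case 0 then show ?case by simp
    next
      case (Suc n)
      show ?case
      proof (intro allI impI)
        fix s :: "'c list" assume ls: "length s < Suc n"
        have "(\<Sum>i\<in>{0..length s}. c (take i s) * pw c n (drop i s)) = 0"
        proof (rule sum.neutral, intro ballI)
          fix i assume i: "i \<in> {0..length s}"
          show "c (take i s) * pw c n (drop i s) = 0"
          proof (cases "i = 0")
            case True then show ?thesis by (simp add: cnil)
          next
            case False
            then have "length (drop i s) < n" using i ls by auto
            then show ?thesis using Suc by simp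
          qed
        qed
        then show "pw c (Suc n) s = 0" by (simp add: convw_def)
      qed
    qed
  qed
  have SMs: "SM f (\<lambda>s. \<Sum>n\<le>length s. pw c n s)"
    unfolding SM_def
  proof
    show "\<forall>s. 0 \<le> (\<Sum>n\<le>length s. pw c n s)" by (auto intro!: sum_nonneg pw_nonneg c0)
    obtain Y where Y: "((\<lambda>(n,s). pw c n s * f s) has_sum Y) (UNIV \<times> UNIV)"
      using Ksum by (auto simp: summable_on_def)
    have "((\<lambda>s. \<Sum>n\<le>length s. pw c n s * f s) has_sum Y) UNIV"
      by (rule sum_by_s[OF Y]) (use van in simp)
    then show "(\<lambda>s. (\<Sum>n\<le>length s. pw c n s) * f s) summable_on UNIV"
      by (simp add: sum_distrib_right summable_on_def) blast
  qed
  have HSs: "HS T (\<lambda>s. \<Sum>n\<le>length s. pw c n s) (\<lambda>Q. \<Sum>n. (F ^^ n) Q)"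
    unfolding HS_def
  proof
    fix Q
    define g where "g = (\<lambda>(n,s). pw c n s *\<^sub>R T s Q)"
    have gsum: "g summable_on UNIV \<times> UNIV"
    proof (rule abs_summable_summable)
      have "(\<lambda>x. norm (g x)) summable_on UNIV \<times> UNIV"
      proof (rule summable_on_comparison_test)
        show "(\<lambda>x. (case x of (n,s) \<Rightarrow> pw c n s * f s) * norm Q) summable_on UNIV \<times> UNIV"
          using Ksum by (rule summable_on_cmult_left)
      next
        fix x :: "nat \<times> 'c list"
        obtain n s where x: "x = (n,s)" by (cases x)
        have "norm (g x) = pw c n s * norm (T s Q)"
          by (simp add: g_def x pw_nonneg c0)
        also have "\<dots> \<le> pw c n s * (f s * norm Q)"
          by (rule mult_left_mono[OF T_bound]) (simp add: pw_nonneg c0)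
        finally show "norm (g x) \<le> (case x of (n,s) \<Rightarrow> pw c n s * f s) * norm Q"
          by (simp add: x mult_ac)
      qed simp
      then show "g abs_summable_on UNIV \<times> UNIV" by simp
    qed
    obtain X where X: "(g has_sum X) (UNIV \<times> UNIV)"
      using gsum by (auto simp: summable_on_def)
    have "((\<lambda>n. (F ^^ n) Q) has_sum X) UNIV"
      by (rule has_sum_SigmaD[OF X]) (use pow[OF SMc HSc] in \<open>auto simp: HS_def g_def\<close>)
    then have "(\<lambda>n. (F ^^ n) Q) sums X" by (rule has_sum_imp_sums)
    then have Xe: "X = (\<Sum>n. (F ^^ n) Q)" by (simp add: sums_unique)
    have "((\<lambda>s. \<Sum>n\<le>length s. pw c n s *\<^sub>R T s Q) has_sum X) UNIV"
      by (rule sum_by_s) (use X van in \<open>auto simp: g_def\<close>)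
    then show "((\<lambda>s. (\<Sum>n\<le>length s. pw c n s) *\<^sub>R T s Q) has_sum (\<Sum>n. (F ^^ n) Q)) UNIV"
      by (simp add: Xe scaleR_sum_left)
  qed
  show ?thesis using van SMs HSs by blast
qed

end



lemma word_mat_nil: "word_mat A [] = mat 1"
  by (simp add: word_mat_def)

lemma word_mat_single: "word_mat A [c] = A c"
  by (simp add: word_mat_def)

lemma word_mat_append: "word_mat A (s @ t) = word_mat A s ** word_mat A t"
  by (induction s) (simp_all add: word_mat_def matrix_mul_assoc)

lemma frob: "(norm (M::real^'n^'m))\<^sup>2 = (\<Sum>i\<in>UNIV. \<Sum>j\<in>UNIV. (M$i$j)\<^sup>2)"
  by (simp only: power2_norm_eq_inner) (simp add: inner_vec_def power2_eq_square)

lemma norm_transpose: "norm (transpose (M::real^'n^'m)) = norm M"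
proof -
  have "(norm (transpose M))\<^sup>2 = (norm M)\<^sup>2"
    unfolding frob by (simp add: transpose_def) (rule sum.swap)
  then show ?thesis by simp
qed

lemma norm_mult_le: "norm ((A::real^'k^'m) ** (B::real^'n^'k)) \<le> norm A * norm B"
proof -
  have e: "(A ** B)$i$j = A$i \<bullet> column j B" for i j
    by (simp add: matrix_matrix_mult_def column_def inner_vec_def)
  have "(norm (A ** B))\<^sup>2 = (\<Sum>i\<in>UNIV. \<Sum>j\<in>UNIV. (A$i \<bullet> column j B)\<^sup>2)"
    by (simp add: frob e)
  also have "\<dots> \<le> (\<Sum>i\<in>UNIV. \<Sum>j\<in>UNIV. (A$i \<bullet> A$i) * (column j B \<bullet> column j B))"
    by (intro sum_mono Cauchy_Schwarz_ineq)
  also have "\<dots> = (\<Sum>i\<in>UNIV. A$i \<bullet> A$i) * (\<Sum>j\<in>UNIV. column j B \<bullet> column j B)"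
    by (simp add: sum_product)
  also have "(\<Sum>i\<in>UNIV. A$i \<bullet> A$i) = (norm A)\<^sup>2"
    by (simp add: power2_norm_eq_inner inner_vec_def)
  also have "(\<Sum>j\<in>UNIV. column j B \<bullet> column j B) = (norm B)\<^sup>2"
    unfolding frob by (simp add: column_def inner_vec_def power2_eq_square) (rule sum.swap)
  finally have "(norm (A ** B))\<^sup>2 \<le> (norm A * norm B)\<^sup>2" by (simp add: power_mult_distrib)
  then show ?thesis
    by (meson mult_nonneg_nonneg norm_ge_zero power2_le_imp_le)
qed

definition Tr :: "('c \<Rightarrow> real^'n^'n) \<Rightarrow> 'c list \<Rightarrow> real^'n^'n \<Rightarrow> real^'n^'n" where
  "Tr A s Q = word_mat A s ** Q ** transpose (word_mat A s)"

definition Tl :: "('c \<Rightarrow> real^'n^'n) \<Rightarrow> 'c list \<Rightarrow> real^'n^'n \<Rightarrow> real^'n^'n" where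
  "Tl A s Q = transpose (word_mat A s) ** Q ** word_mat A s"

definition ff :: "('c \<Rightarrow> real^'n^'n) \<Rightarrow> 'c list \<Rightarrow> real" where
  "ff A s = (norm (word_mat A s))\<^sup>2"

definition tr :: "real^'n^'n \<Rightarrow> real" where
  "tr X = (\<Sum>i\<in>UNIV. X$i$i)"

lemma matrix_add_rdistrib': "((A::real^'k^'m) + B) ** (C::real^'n^'k) = A ** C + B ** C"
  by (vector matrix_matrix_mult_def sum.distrib[symmetric] field_simps)

lemma lin_sandwich: "bounded_linear (\<lambda>Q::real^'n^'n. (M::real^'n^'n) ** Q ** N)"
  unfolding linear_conv_bounded_linear[symmetric]
  by (rule linearI) (simp_all add: matrix_add_ldistrib matrix_add_rdistrib'
      scalar_matrix_assoc matrix_scalar_ac)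

lemma tr_lin: "bounded_linear (tr :: real^'n^'n \<Rightarrow> real)"
  unfolding linear_conv_bounded_linear[symmetric]
  by (rule linearI) (simp_all add: tr_def sum.distrib sum_distrib_left)

lemma mat1_nz: "mat 1 \<noteq> (0::real^'n^'n)"
proof
  assume "mat 1 = (0::real^'n^'n)"
  then have "(mat 1 :: real^'n^'n) $ undefined $ undefined = 0" by simp
  then show False by (simp add: mat_def)
qed

lemma tstruct_r: "tstruct (Tr A) (ff A) False tr (mat 1)"
proof (rule tstruct.intro)
  fix s t Q
  show "bounded_linear (Tr A s)"
    unfolding Tr_def[abs_def] by (rule lin_sandwich)
  show "Tr A [] Q = Q" by (simp add: Tr_def word_mat_nil)
  show "Tr A (s @ t) Q = (if False then Tr A t (Tr A s Q) else Tr A s (Tr A t Q))"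
    by (simp add: Tr_def word_mat_append matrix_transpose_mul matrix_mul_assoc)
  have "norm (Tr A s Q) \<le> norm (word_mat A s ** Q) * norm (transpose (word_mat A s))"
    unfolding Tr_def by (rule norm_mult_le)
  also have "\<dots> \<le> (norm (word_mat A s) * norm Q) * norm (word_mat A s)"
    by (simp add: norm_transpose mult_right_mono norm_mult_le)
  finally show "norm (Tr A s Q) \<le> ff A s * norm Q"
    by (simp add: ff_def power2_eq_square mult_ac)
  show "0 \<le> ff A s" by (simp add: ff_def)
  have "norm (word_mat A (s @ t)) \<le> norm (word_mat A s) * norm (word_mat A t)"
    by (simp add: word_mat_append norm_mult_le)
  then show "ff A (s @ t) \<le> ff A s * ff A t"
    by (simp add: ff_def power_mono power_mult_distrib[symmetric])
  show "0 < ff A []" by (simp add: ff_def word_mat_nil mat1_nz)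
  show "bounded_linear tr" by (rule tr_lin)
  show "tr (Tr A s (mat 1)) = ff A s"
    unfolding Tr_def matrix_mul_rid ff_def frob
    by (simp add: tr_def matrix_matrix_mult_def transpose_def power2_eq_square)
qed

lemma tstruct_l: "tstruct (Tl A) (ff A) True tr (mat 1)"
proof (rule tstruct.intro)
  fix s t Q
  show "bounded_linear (Tl A s)"
    unfolding Tl_def[abs_def] by (rule lin_sandwich)
  show "Tl A [] Q = Q" by (simp add: Tl_def word_mat_nil)
  show "Tl A (s @ t) Q = (if True then Tl A t (Tl A s Q) else Tl A s (Tl A t Q))"
    by (simp add: Tl_def word_mat_append matrix_transpose_mul matrix_mul_assoc)
  have "norm (Tl A s Q) \<le> norm (transpose (word_mat A s) ** Q) * norm (word_mat A s)"
    unfolding Tl_def by (rule norm_mult_le)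
  also have "\<dots> \<le> (norm (word_mat A s) * norm Q) * norm (word_mat A s)"
    by (metis mult_right_mono norm_ge_zero norm_mult_le norm_transpose)
  finally show "norm (Tl A s Q) \<le> ff A s * norm Q"
    by (simp add: ff_def power2_eq_square mult_ac)
  show "0 \<le> ff A s" by (simp add: ff_def)
  have "norm (word_mat A (s @ t)) \<le> norm (word_mat A s) * norm (word_mat A t)"
    by (simp add: word_mat_append norm_mult_le)
  then show "ff A (s @ t) \<le> ff A s * ff A t"
    by (simp add: ff_def power_mono power_mult_distrib[symmetric])
  show "0 < ff A []" by (simp add: ff_def word_mat_nil mat1_nz)
  show "bounded_linear tr" by (rule tr_lin)
  have "tr (Tl A s (mat 1)) = (\<Sum>i\<in>UNIV. \<Sum>k\<in>UNIV. (word_mat A s $ k $ i)\<^sup>2)"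
    unfolding Tl_def matrix_mul_rid
    by (simp add: tr_def matrix_matrix_mult_def transpose_def power2_eq_square)
  also have "\<dots> = (\<Sum>k\<in>UNIV. \<Sum>i\<in>UNIV. (word_mat A s $ k $ i)\<^sup>2)"
    by (rule sum.swap)
  finally show "tr (Tl A s (mat 1)) = ff A s"
    by (simp add: ff_def frob)
qed




definition pieces :: "('c list \<Rightarrow> 'a::comm_semiring_1) \<Rightarrow> nat \<Rightarrow> 'c list \<Rightarrow> 'a" where
  "pieces m n s = (\<Sum>ps\<in>{ps. length ps = n \<and> concat ps = s}. prod_list (map m ps))"

lemma fin_pieces: "finite {ps :: 'c list list. length ps = n \<and> concat ps = s}"
proof (rule finite_subset)
  let ?B = "{t. set t \<subseteq> set s \<and> length t \<le> length s}"
  show "{ps :: 'c list list. length ps = n \<and> concat ps = s} \<subseteq> {ps. set ps \<subseteq> ?B \<and> length ps = n}"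
  proof
    fix ps :: "'c list list" assume "ps \<in> {ps :: 'c list list. length ps = n \<and> concat ps = s}"
    then have "length ps = n" "concat ps = s" by auto
    moreover have "t \<in> ?B" if "t \<in> set ps" for t
    proof -
      have "length t \<le> sum_list (map length ps)"
        using that by (simp add: member_le_sum_list)
      then show ?thesis using that \<open>concat ps = s\<close> by (auto simp: length_concat)
    qed
    ultimately show "ps \<in> {ps. set ps \<subseteq> ?B \<and> length ps = n}" by blast
  qed
  show "finite {ps. set ps \<subseteq> ?B \<and> length ps = n}"
    by (rule finite_lists_length_eq) (use finite_lists_length_le[of "set s" "length s"] in auto)
qed

lemma pieces_0: "pieces m 0 s = (if s = [] then 1 else 0)"
proof -
  have "{ps. length ps = 0 \<and> concat ps = s} = (if s = [] then {[]} else {})" by auto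
  then show ?thesis by (simp add: pieces_def)
qed

lemma pieces_Suc: "pieces m (Suc n) s = (\<Sum>i\<in>{0..length s}. m (take i s) * pieces m n (drop i s))"
proof -
  let ?S = "SIGMA i:{0..length s}. {ps. length ps = n \<and> concat ps = drop i s}"
  let ?h = "\<lambda>(i, ps). take i s # ps"
  have img: "{ps. length ps = Suc n \<and> concat ps = s} = ?h ` ?S"
  proof (rule set_eqI, rule iffI)
    fix ps assume "ps \<in> {ps. length ps = Suc n \<and> concat ps = s}"
    then obtain p ps' where ps: "ps = p # ps'" "length ps' = n" "p @ concat ps' = s"
      by (cases ps) auto
    then have "(length p, ps') \<in> ?S" "ps = ?h (length p, ps')" by auto
    then show "ps \<in> ?h ` ?S" by blast
  next
    fix ps assume "ps \<in> ?h ` ?S"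
    then show "ps \<in> {ps. length ps = Suc n \<and> concat ps = s}" by auto
  qed
  have inj: "inj_on ?h ?S"
  proof (rule inj_onI)
    fix x y assume x: "x \<in> ?S" and y: "y \<in> ?S" and e: "?h x = ?h y"
    obtain i ps where xi: "x = (i, ps)" by (cases x)
    obtain j qs where yj: "y = (j, qs)" by (cases y)
    have "i \<le> length s" "j \<le> length s" using x y xi yj by auto
    moreover have "take i s = take j s" "ps = qs" using e xi yj by auto
    ultimately have "i = j" by (metis length_take min.absorb2)
    then show "x = y" using xi yj \<open>ps = qs\<close> by simp
  qed
  have "pieces m (Suc n) s = (\<Sum>x\<in>?S. prod_list (map m (?h x)))"
    unfolding pieces_def img by (rule sum.reindex[OF inj, unfolded comp_def])
  also have "\<dots> = (\<Sum>i\<in>{0..length s}. \<Sum>ps\<in>{ps. length ps = n \<and> concat ps = drop i s}. m (take i s) * prod_list (map m ps))"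
    by (subst sum.Sigma) (auto simp: fin_pieces case_prod_unfold)
  also have "\<dots> = (\<Sum>i\<in>{0..length s}. m (take i s) * pieces m n (drop i s))"
    by (simp add: pieces_def sum_distrib_left)
  finally show ?thesis .
qed

lemma fin_add: "x \<noteq> \<infinity> \<Longrightarrow> y \<noteq> \<infinity> \<Longrightarrow> x + y \<noteq> (\<infinity>::enat) \<and> real (the_enat (x + y)) = real (the_enat x) + real (the_enat y)"
  by (cases x; cases y) auto

lemma fin_mult: "x \<noteq> \<infinity> \<Longrightarrow> y \<noteq> \<infinity> \<Longrightarrow> x * y \<noteq> (\<infinity>::enat) \<and> real (the_enat (x * y)) = real (the_enat x) * real (the_enat y)"
  by (cases x; cases y) auto

lemma fin_sum: "(\<And>i. i \<in> A \<Longrightarrow> x i \<noteq> \<infinity>) \<Longrightarrow> sum x A \<noteq> (\<infinity>::enat) \<and> real (the_enat (sum x A)) = (\<Sum>i\<in>A. real (the_enat (x i)))"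
proof (induction A rule: infinite_finite_induct)
  case (insert a A)
  then show ?case using fin_add[of "x a" "sum x A"] by auto
qed (auto simp: zero_enat_def)

lemma pieces_pw:
  assumes fin: "\<And>t. m t \<noteq> \<infinity>"
  shows "pieces m n s \<noteq> \<infinity> \<and> real (the_enat (pieces m n s)) = pw (\<lambda>t. real (the_enat (m t))) n s"
proof (induction n arbitrary: s)
  case 0
  then show ?case by (simp add: pieces_0 one_enat_def zero_enat_def)
next
  case (Suc n)
  have t: "m (take i s) * pieces m n (drop i s) \<noteq> \<infinity> \<and>
      real (the_enat (m (take i s) * pieces m n (drop i s))) = real (the_enat (m (take i s))) * pw (\<lambda>t. real (the_enat (m t))) n (drop i s)" for i
    using fin_mult[OF fin Suc[of "drop i s", THEN conjunct1]] Suc[of "drop i s"] by simp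
  show ?case
    using fin_sum[of "{0..length s}" "\<lambda>i. m (take i s) * pieces m n (drop i s)"] t
    by (simp add: pieces_Suc convw_def)
qed

lemma SUP_stable:
  fixes g :: "nat \<Rightarrow> enat"
  assumes "\<And>n. L < n \<Longrightarrow> g n = 0"
  shows "(SUP N. \<Sum>n<N. g n) = (\<Sum>n<Suc L. g n)"
proof (rule antisym)
  show "(SUP N. \<Sum>n<N. g n) \<le> (\<Sum>n<Suc L. g n)"
  proof (rule SUP_least)
    fix N
    have "(\<Sum>n<N. g n) = (\<Sum>n\<in>{..<N} \<inter> {..<Suc L}. g n)"
    proof (rule sum.mono_neutral_right)
      show "\<forall>i\<in>{..<N} - {..<N} \<inter> {..<Suc L}. g i = 0"
      proof
        fix i assume "i \<in> {..<N} - {..<N} \<inter> {..<Suc L}"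
        then have "L < i" by auto
        then show "g i = 0" by (rule assms)
      qed
    qed auto
    also have "\<dots> \<le> (\<Sum>n<Suc L. g n)"
      by (rule sum_mono2) auto
    finally show "(\<Sum>n<N. g n) \<le> (\<Sum>n<Suc L. g n)" .
  qed
  show "(\<Sum>n<Suc L. g n) \<le> (SUP N. \<Sum>n<N. g n)"
    by (rule SUP_upper) simp
qed




definition cw :: "'c regex \<Rightarrow> 'c list \<Rightarrow> real" where
  "cw R s = real (the_enat (match_count R s))"

lemma cw_fun: "cw R = (\<lambda>s. real (the_enat (match_count R s)))"
  by (rule ext) (simp add: cw_def)

lemma zero_of_fin: "x \<noteq> \<infinity> \<Longrightarrow> real (the_enat x) = 0 \<Longrightarrow> x = (0::enat)"
  by (cases x) (auto simp: zero_enat_def)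

lemma main:
  fixes A :: "'c \<Rightarrow> real^'n^'n" and R :: "'c regex"
  shows "(conv_r A R \<longleftrightarrow> conv_l A R) \<and> (conv_r A R \<longrightarrow> (\<forall>s. match_count R s \<noteq> \<infinity>) \<and>
    SM (ff A) (cw R) \<and> HS (Tr A) (cw R) (E_r A R) \<and> HS (Tl A) (cw R) (E_l A R))"
proof (induction R)
  case (Atom c)
  have mc: "cw (Atom c) = (\<lambda>s. if s = [c] then 1 else 0)"
    by (rule ext) (simp add: cw_def one_enat_def zero_enat_def)
  have SM: "SM (ff A) (cw (Atom c))"
    unfolding SM_def
  proof
    show "\<forall>s. 0 \<le> cw (Atom c) s" by (simp add: mc)
    have "((\<lambda>s. cw (Atom c) s * ff A s) has_sum (cw (Atom c) [c] * ff A [c])) UNIV"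
      by (rule has_sum_point) (simp add: mc)
    then show "(\<lambda>s. cw (Atom c) s * ff A s) summable_on UNIV" using summable_on_def by blast
  qed
  have HSr: "HS (Tr A) (cw (Atom c)) (E_r A (Atom c))"
    unfolding HS_def
  proof
    fix Q
    have "((\<lambda>s. cw (Atom c) s *\<^sub>R Tr A s Q) has_sum (cw (Atom c) [c] *\<^sub>R Tr A [c] Q)) UNIV"
      by (rule has_sum_point) (simp add: mc)
    then show "((\<lambda>s. cw (Atom c) s *\<^sub>R Tr A s Q) has_sum E_r A (Atom c) Q) UNIV"
      by (simp add: mc Tr_def word_mat_single)
  qed
  have HSl: "HS (Tl A) (cw (Atom c)) (E_l A (Atom c))"
    unfolding HS_def
  proof
    fix Q
    have "((\<lambda>s. cw (Atom c) s *\<^sub>R Tl A s Q) has_sum (cw (Atom c) [c] *\<^sub>R Tl A [c] Q)) UNIV"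
      by (rule has_sum_point) (simp add: mc)
    then show "((\<lambda>s. cw (Atom c) s *\<^sub>R Tl A s Q) has_sum E_l A (Atom c) Q) UNIV"
      by (simp add: mc Tl_def word_mat_single)
  qed
  have fin: "\<forall>s. match_count (Atom c) s \<noteq> \<infinity>" by (auto simp: one_enat_def zero_enat_def)
  show ?case using SM HSr HSl fin by simp
next
  case (Conc R1 R2)
  have iff: "conv_r A (Conc R1 R2) \<longleftrightarrow> conv_l A (Conc R1 R2)" using Conc by simp
  moreover have "(\<forall>s. match_count (Conc R1 R2) s \<noteq> \<infinity>) \<and>
    SM (ff A) (cw (Conc R1 R2)) \<and> HS (Tr A) (cw (Conc R1 R2)) (E_r A (Conc R1 R2)) \<and>
    HS (Tl A) (cw (Conc R1 R2)) (E_l A (Conc R1 R2))" if cv: "conv_r A (Conc R1 R2)"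
  proof -
    have c1: "conv_r A R1" and c2: "conv_r A R2" using cv by auto
    note I1 = Conc.IH(1)[THEN conjunct2, rule_format, OF c1]
    note I2 = Conc.IH(2)[THEN conjunct2, rule_format, OF c2]
    have fm: "match_count (Conc R1 R2) s \<noteq> \<infinity> \<and> cw (Conc R1 R2) s = convw (cw R1) (cw R2) s" for s
    proof -
      have t: "match_count R1 (take i s) * match_count R2 (drop i s) \<noteq> \<infinity> \<and>
          real (the_enat (match_count R1 (take i s) * match_count R2 (drop i s))) = cw R1 (take i s) * cw R2 (drop i s)" for i
        using fin_mult[of "match_count R1 (take i s)" "match_count R2 (drop i s)"] I1 I2 by (simp add: cw_def)
      show ?thesis
        using fin_sum[of "{0..length s}" "\<lambda>i. match_count R1 (take i s) * match_count R2 (drop i s)"] t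
        by (simp add: cw_def convw_def)
    qed
    have e: "cw (Conc R1 R2) = convw (cw R1) (cw R2)" using fm by (intro ext) simp
    have r: "SM (ff A) (convw (cw R1) (cw R2)) \<and> HS (Tr A) (convw (cw R1) (cw R2)) (if False then E_r A R2 \<circ> E_r A R1 else E_r A R1 \<circ> E_r A R2)"
      using tstruct.conc[OF tstruct_r] I1 I2 by blast
    have l: "SM (ff A) (convw (cw R1) (cw R2)) \<and> HS (Tl A) (convw (cw R1) (cw R2)) (if True then E_l A R2 \<circ> E_l A R1 else E_l A R1 \<circ> E_l A R2)"
      using tstruct.conc[OF tstruct_l] I1 I2 by blast
    show ?thesis using fm r l e by simp
  qed
  ultimately show ?case by blast
next
  case (Alt R1 R2)
  have iff: "conv_r A (Alt R1 R2) \<longleftrightarrow> conv_l A (Alt R1 R2)" using Alt by simp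
  moreover have "(\<forall>s. match_count (Alt R1 R2) s \<noteq> \<infinity>) \<and>
    SM (ff A) (cw (Alt R1 R2)) \<and> HS (Tr A) (cw (Alt R1 R2)) (E_r A (Alt R1 R2)) \<and>
    HS (Tl A) (cw (Alt R1 R2)) (E_l A (Alt R1 R2))" if cv: "conv_r A (Alt R1 R2)"
  proof -
    have c1: "conv_r A R1" and c2: "conv_r A R2" using cv by auto
    note I1 = Alt.IH(1)[THEN conjunct2, rule_format, OF c1]
    note I2 = Alt.IH(2)[THEN conjunct2, rule_format, OF c2]
    have fm: "match_count (Alt R1 R2) s \<noteq> \<infinity> \<and> cw (Alt R1 R2) s = cw R1 s + cw R2 s" for s
      using fin_add[of "match_count R1 s" "match_count R2 s"] I1 I2 by (simp add: cw_def)
    have SM: "SM (ff A) (cw (Alt R1 R2))"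
      unfolding SM_def
    proof
      show "\<forall>s. 0 \<le> cw (Alt R1 R2) s" by (simp add: cw_def)
      have "(\<lambda>s. cw R1 s * ff A s + cw R2 s * ff A s) summable_on UNIV"
        by (rule summable_on_add) (use I1 I2 in \<open>auto simp: SM_def\<close>)
      then show "(\<lambda>s. cw (Alt R1 R2) s * ff A s) summable_on UNIV"
        by (simp add: fm distrib_right)
    qed
    have HSr: "HS (Tr A) (cw (Alt R1 R2)) (E_r A (Alt R1 R2))"
      unfolding HS_def
    proof
      fix Q
      have "((\<lambda>s. cw R1 s *\<^sub>R Tr A s Q + cw R2 s *\<^sub>R Tr A s Q) has_sum (E_r A R1 Q + E_r A R2 Q)) UNIV"
        by (rule has_sum_add) (use I1 I2 in \<open>auto simp: HS_def\<close>)
      then show "((\<lambda>s. cw (Alt R1 R2) s *\<^sub>R Tr A s Q) has_sum E_r A (Alt R1 R2) Q) UNIV"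
        by (simp add: fm scaleR_add_left)
    qed
    have HSl: "HS (Tl A) (cw (Alt R1 R2)) (E_l A (Alt R1 R2))"
      unfolding HS_def
    proof
      fix Q
      have "((\<lambda>s. cw R1 s *\<^sub>R Tl A s Q + cw R2 s *\<^sub>R Tl A s Q) has_sum (E_l A R1 Q + E_l A R2 Q)) UNIV"
        by (rule has_sum_add) (use I1 I2 in \<open>auto simp: HS_def\<close>)
      then show "((\<lambda>s. cw (Alt R1 R2) s *\<^sub>R Tl A s Q) has_sum E_l A (Alt R1 R2) Q) UNIV"
        by (simp add: fm scaleR_add_left)
    qed
    show ?thesis using fm SM HSr HSl by blast
  qed
  ultimately show ?case by blast
next
  case (Star S)
  have iff: "conv_r A (Star S) \<longleftrightarrow> conv_l A (Star S)"
  proof (cases "conv_r A S")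
    case True
    note I = Star.IH[THEN conjunct2, rule_format, OF True]
    have cl: "conv_l A S" using True Star.IH by blast
    have "(\<forall>Q. summable (\<lambda>n. (E_r A S ^^ n) Q)) \<longleftrightarrow> KK (ff A) (cw S)"
      using tstruct.K_of_conv[OF tstruct_r] tstruct.conv_of_K[OF tstruct_r] I by blast
    moreover have "(\<forall>Q. summable (\<lambda>n. (E_l A S ^^ n) Q)) \<longleftrightarrow> KK (ff A) (cw S)"
      using tstruct.K_of_conv[OF tstruct_l] tstruct.conv_of_K[OF tstruct_l] I by blast
    ultimately show ?thesis using True cl by simp
  next
    case False
    then have "\<not> conv_l A S" using Star.IH by blast
    then show ?thesis using False by simp
  qed
  moreover have "(\<forall>s. match_count (Star S) s \<noteq> \<infinity>) \<and>
    SM (ff A) (cw (Star S)) \<and> HS (Tr A) (cw (Star S)) (E_r A (Star S)) \<and>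
    HS (Tl A) (cw (Star S)) (E_l A (Star S))" if cv: "conv_r A (Star S)"
  proof -
    have cS: "conv_r A S" and sm: "\<forall>Q. summable (\<lambda>n. (E_r A S ^^ n) Q)" using cv by auto
    note I = Star.IH[THEN conjunct2, rule_format, OF cS]
    have K: "KK (ff A) (cw S)"
      using tstruct.K_of_conv[OF tstruct_r] I sm by blast
    have nat: "\<And>s. cw S s \<in> \<nat>" by (simp add: cw_def)
    have sr: "(\<forall>n s. length s < n \<longrightarrow> pw (cw S) n s = 0) \<and> SM (ff A) (\<lambda>s. \<Sum>n\<le>length s. pw (cw S) n s)
     \<and> HS (Tr A) (\<lambda>s. \<Sum>n\<le>length s. pw (cw S) n s) (\<lambda>Q. \<Sum>n. (E_r A S ^^ n) Q)"
      using tstruct.star[OF tstruct_r] I nat K by blast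
    have sl: "HS (Tl A) (\<lambda>s. \<Sum>n\<le>length s. pw (cw S) n s) (\<lambda>Q. \<Sum>n. (E_l A S ^^ n) Q)"
      using tstruct.star[OF tstruct_l] I nat K by blast
    have finS: "\<And>t. match_count S t \<noteq> \<infinity>" using I by blast
    have fm: "match_count (Star S) s \<noteq> \<infinity> \<and> cw (Star S) s = (\<Sum>n\<le>length s. pw (cw S) n s)" for s
    proof -
      have pp: "pieces (match_count S) n s \<noteq> \<infinity> \<and> real (the_enat (pieces (match_count S) n s)) = pw (cw S) n s" for n
        using pieces_pw[OF finS, where n=n and s=s] by (simp add: cw_fun)
      have z: "pieces (match_count S) n s = 0" if "length s < n" for n
        using pp[of n] sr that zero_of_fin by metis
      have "match_count (Star S) s = (SUP N. \<Sum>n<N. pieces (match_count S) n s)"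
        by (simp add: pieces_def)
      also have "\<dots> = (\<Sum>n<Suc (length s). pieces (match_count S) n s)"
        by (rule SUP_stable) (use z in auto)
      finally have mc: "match_count (Star S) s = (\<Sum>n\<le>length s. pieces (match_count S) n s)"
        by (simp add: lessThan_Suc_atMost)
      show ?thesis
        unfolding cw_def mc
        using fin_sum[of "{..length s}" "\<lambda>n. pieces (match_count S) n s"] pp
        by (simp add: cw_fun)
    qed
    have e: "cw (Star S) = (\<lambda>s. \<Sum>n\<le>length s. pw (cw S) n s)" using fm by (intro ext) simp
    show ?thesis using fm sr sl e by simp
  qed
  ultimately show ?case by blast
qed

lemma unamb_sum:
  fixes X :: "'c list \<Rightarrow> 'a::real_normed_vector"
  assumes u: "unambiguous R" and h: "((\<lambda>s. real (the_enat (match_count R s)) *\<^sub>R X s) has_sum Y) UNIV"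
  shows "(X has_sum Y) (lang R)"
proof -
  have "((\<lambda>s. real (the_enat (match_count R s)) *\<^sub>R X s) has_sum Y) UNIV \<longleftrightarrow> (X has_sum Y) (lang R)"
  proof (rule has_sum_cong_neutral)
    fix x assume "x \<in> UNIV - lang R"
    then have "match_count R x = 0" by (simp add: lang_def)
    then show "real (the_enat (match_count R x)) *\<^sub>R X x = 0" by (simp add: zero_enat_def)
  next
    fix x assume "x \<in> UNIV \<inter> lang R"
    then have "match_count R x = 1" using u by (auto simp: lang_def unambiguous_def)
    then show "real (the_enat (match_count R x)) *\<^sub>R X x = X x" by (simp add: one_enat_def)
  qed simp
  then show ?thesis using h by blast
qed

theorem theorem2:
  fixes A :: "'c::finite \<Rightarrow> real^'n^'n" and R :: "'c regex"
  shows "(conv_r A R \<longleftrightarrow> conv_l A R) \<and>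
    (conv_r A R \<longrightarrow>
      (\<forall>s. match_count R s \<noteq> \<infinity>) \<and>
      (\<forall>Qr. ((\<lambda>s. real (the_enat (match_count R s)) *\<^sub>R
                 (word_mat A s ** Qr ** transpose (word_mat A s))) has_sum E_r A R Qr) UNIV) \<and>
      (\<forall>Ql. ((\<lambda>s. real (the_enat (match_count R s)) *\<^sub>R
                 (transpose (word_mat A s) ** Ql ** word_mat A s)) has_sum E_l A R Ql) UNIV) \<and>
      (unambiguous R \<longrightarrow>
        (\<forall>Qr. ((\<lambda>s. word_mat A s ** Qr ** transpose (word_mat A s)) has_sum E_r A R Qr) (lang R)) \<and>
        (\<forall>Ql. ((\<lambda>s. transpose (word_mat A s) ** Ql ** word_mat A s) has_sum E_l A R Ql) (lang R))))"
proof -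
  note M = main[of A R]
  have r: "\<forall>Qr. ((\<lambda>s. real (the_enat (match_count R s)) *\<^sub>R
                 (word_mat A s ** Qr ** transpose (word_mat A s))) has_sum E_r A R Qr) UNIV"
    if "conv_r A R" using M that by (simp add: HS_def cw_def Tr_def)
  have l: "\<forall>Ql. ((\<lambda>s. real (the_enat (match_count R s)) *\<^sub>R
                 (transpose (word_mat A s) ** Ql ** word_mat A s)) has_sum E_l A R Ql) UNIV"
    if "conv_r A R" using M that by (simp add: HS_def cw_def Tl_def)
  show ?thesis
  proof (intro conjI impI)
    show "conv_r A R = conv_l A R" using M by blast
    assume cv: "conv_r A R"
    show "\<forall>s. match_count R s \<noteq> \<infinity>" using M cv by blast
    show "\<forall>Qr. ((\<lambda>s. real (the_enat (match_count R s)) *\<^sub>R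
                 (word_mat A s ** Qr ** transpose (word_mat A s))) has_sum E_r A R Qr) UNIV"
      by (rule r[OF cv])
    show "\<forall>Ql. ((\<lambda>s. real (the_enat (match_count R s)) *\<^sub>R
                 (transpose (word_mat A s) ** Ql ** word_mat A s)) has_sum E_l A R Ql) UNIV"
      by (rule l[OF cv])
    assume u: "unambiguous R"
    show "\<forall>Qr. ((\<lambda>s. word_mat A s ** Qr ** transpose (word_mat A s)) has_sum E_r A R Qr) (lang R)"
    proof
      fix Qr show "((\<lambda>s. word_mat A s ** Qr ** transpose (word_mat A s)) has_sum E_r A R Qr) (lang R)"
        by (rule unamb_sum[OF u]) (use r[OF cv] in blast)
    qed
    show "\<forall>Ql. ((\<lambda>s. transpose (word_mat A s) ** Ql ** word_mat A s) has_sum E_l A R Ql) (lang R)"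
    proof
      fix Ql show "((\<lambda>s. transpose (word_mat A s) ** Ql ** word_mat A s) has_sum E_l A R Ql) (lang R)"
        by (rule unamb_sum[OF u]) (use l[OF cv] in blast)
    qed
  qed
qed



end
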